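(* Let $(\Lambda,d)$ be a $k$-graph and let $\sim$ be an equivalence relation on (the set of morphisms of) $\Lambda$ with the following properties: (1) if $\mu \sim \nu$ then $d(\mu) = d(\nu)$; (2) if $\alpha \sim \alpha'$ and $\beta \sim \beta'$ with $r(\beta) = s(\alpha)$ and $r(\beta') = s(\alpha')$, then $\alpha\beta \sim \alpha'\beta'$; (3) if $\alpha\beta \sim \alpha'\beta'$ (both composable pairs) and $d(\alpha) = d(\alpha')$, then $\alpha \sim \alpha'$ and $\beta \sim \beta'$; (4) if $s(\alpha) \sim r(\beta)$, then there exist $\alpha', \beta'$ such that $\alpha' \sim \alpha$, $\beta'\sim\beta$ and $s(\alpha') = r(\beta')$. Then the formulas $d([\mu]) = d(\mu)$, $r([\mu]) = [r(\mu)]$, $s([\mu]) = [s(\mu)]$, and $[\lambda][\mu] = [\alpha\beta]$ (for any $\alpha\in[\lambda]$, $\beta\in[\mu]$ with $s(\alpha)=r(\beta)$, whenever $[s(\lambda)]=[r(\mu)]$) are well defined, and with these structure maps the quotient $\Lambda/{\sim}$ is a $k$-graph.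
   Context: For $k\ge 0$, $\mathbb{N}^k$ is the additive monoid with generators $e_1,\dots,e_k$ ($\mathbb{N}^0=\{0\}$). A $k$-graph is a countable small category $\Lambda$ together with a functor $d:\Lambda\to\mathbb{N}^k$ (the degree map) satisfying the factorisation property: writing $\Lambda^n=d^{-1}(n)$, for all $m,n\in\mathbb{N}^k$ the composition map $(\mu,\nu)\mapsto\mu\nu$ is a bijection from $\{(\mu,\nu)\in\Lambda^m\times\Lambda^n : s(\mu)=r(\nu)\}$ onto $\Lambda^{m+n}$. Objects are identified with their identity morphisms, so $\Lambda^0$ is the set of vertices, and $r,s:\Lambda\to\Lambda^0$ are the range (codomain) and source (domain) maps. $k$-graphs are assumed nonempty. $[\lambda]$ denotes the $\sim$-equivalence class of $\lambda$. *)

theory Defs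
  imports Main "HOL-Library.Countable_Set"
begin

text \<open>N^k is represented as functions nat => nat vanishing at indices >= k;
  the generator e_i (i < k) is the indicator of i. Addition is pointwise.\<close>

definition Nk :: "nat \<Rightarrow> (nat \<Rightarrow> nat) set" where
  "Nk k = {n. \<forall>i\<ge>k. n i = 0}"

definition addk :: "(nat \<Rightarrow> nat) \<Rightarrow> (nat \<Rightarrow> nat) \<Rightarrow> (nat \<Rightarrow> nat)" where
  "addk m n = (\<lambda>i. m i + n i)"

text \<open>A small category with morphism set M, objects identified with identity
  morphisms, range r (codomain), source s (domain), composition c (c mu nu = mu nu,
  defined when s mu = r nu).\<close>

definition is_category :: "'a set \<Rightarrow> ('a \<Rightarrow> 'a) \<Rightarrow> ('a \<Rightarrow> 'a) \<Rightarrow> ('a \<Rightarrow> 'a \<Rightarrow> 'a) \<Rightarrow> bool" where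
  "is_category M r s c \<longleftrightarrow>
     (\<forall>\<mu>\<in>M. r \<mu> \<in> M \<and> s \<mu> \<in> M \<and>
        r (r \<mu>) = r \<mu> \<and> s (r \<mu>) = r \<mu> \<and> r (s \<mu>) = s \<mu> \<and> s (s \<mu>) = s \<mu> \<and>
        c (r \<mu>) \<mu> = \<mu> \<and> c \<mu> (s \<mu>) = \<mu>) \<and>
     (\<forall>\<mu>\<in>M. \<forall>\<nu>\<in>M. s \<mu> = r \<nu> \<longrightarrow>
        c \<mu> \<nu> \<in> M \<and> r (c \<mu> \<nu>) = r \<mu> \<and> s (c \<mu> \<nu>) = s \<nu>) \<and>
     (\<forall>\<mu>\<in>M. \<forall>\<nu>\<in>M. \<forall>\<rho>\<in>M. s \<mu> = r \<nu> \<longrightarrow> s \<nu> = r \<rho> \<longrightarrow>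
        c (c \<mu> \<nu>) \<rho> = c \<mu> (c \<nu> \<rho>))"

definition is_kgraph :: "nat \<Rightarrow> 'a set \<Rightarrow> ('a \<Rightarrow> 'a) \<Rightarrow> ('a \<Rightarrow> 'a) \<Rightarrow> ('a \<Rightarrow> 'a \<Rightarrow> 'a)
    \<Rightarrow> ('a \<Rightarrow> nat \<Rightarrow> nat) \<Rightarrow> bool" where
  "is_kgraph k M r s c d \<longleftrightarrow>
     M \<noteq> {} \<and> countable M \<and> is_category M r s c \<and>
     (\<forall>\<mu>\<in>M. d \<mu> \<in> Nk k) \<and>
     (\<forall>\<mu>\<in>M. r \<mu> = \<mu> \<longrightarrow> d \<mu> = (\<lambda>_. 0)) \<and>
     (\<forall>\<mu>\<in>M. \<forall>\<nu>\<in>M. s \<mu> = r \<nu> \<longrightarrow> d (c \<mu> \<nu>) = addk (d \<mu>) (d \<nu>)) \<and>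
     (\<forall>\<xi>\<in>M. \<forall>m\<in>Nk k. \<forall>n\<in>Nk k. d \<xi> = addk m n \<longrightarrow>
        (\<exists>!p. fst p \<in> M \<and> snd p \<in> M \<and> s (fst p) = r (snd p) \<and>
              d (fst p) = m \<and> d (snd p) = n \<and> c (fst p) (snd p) = \<xi>))"

definition qdeg :: "('a \<Rightarrow> nat \<Rightarrow> nat) \<Rightarrow> 'a set \<Rightarrow> nat \<Rightarrow> nat" where
  "qdeg d X = d (SOME \<mu>. \<mu> \<in> X)"

definition qmap :: "('a \<times> 'a) set \<Rightarrow> ('a \<Rightarrow> 'a) \<Rightarrow> 'a set \<Rightarrow> 'a set" where
  "qmap R f X = R `` {f (SOME \<mu>. \<mu> \<in> X)}"

definition qcomp :: "('a \<times> 'a) set \<Rightarrow> ('a \<Rightarrow> 'a) \<Rightarrow> ('a \<Rightarrow> 'a) \<Rightarrow> ('a \<Rightarrow> 'a \<Rightarrow> 'a)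
    \<Rightarrow> 'a set \<Rightarrow> 'a set \<Rightarrow> 'a set" where
  "qcomp R r s c X Y =
     (let p = (SOME p. fst p \<in> X \<and> snd p \<in> Y \<and> s (fst p) = r (snd p))
      in R `` {c (fst p) (snd p)})"

end

theory Submission
  imports Defs
begin

theorem proposition2p1:
  fixes k :: nat and M :: "'a set" and r s :: "'a \<Rightarrow> 'a"
    and c :: "'a \<Rightarrow> 'a \<Rightarrow> 'a" and d :: "'a \<Rightarrow> nat \<Rightarrow> nat"
    and R :: "('a \<times> 'a) set"
  assumes kg: "is_kgraph k M r s c d"
    and eq: "equiv M R"
    and h1: "\<And>\<mu> \<nu>. (\<mu>, \<nu>) \<in> R \<Longrightarrow> d \<mu> = d \<nu>"
    and h2: "\<And>\<alpha> \<alpha>' \<beta> \<beta>'. (\<alpha>, \<alpha>') \<in> R \<Longrightarrow> (\<beta>, \<beta>') \<in> R \<Longrightarrow>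
               r \<beta> = s \<alpha> \<Longrightarrow> r \<beta>' = s \<alpha>' \<Longrightarrow> (c \<alpha> \<beta>, c \<alpha>' \<beta>') \<in> R"
    and h3: "\<And>\<alpha> \<alpha>' \<beta> \<beta>'. \<alpha> \<in> M \<Longrightarrow> \<beta> \<in> M \<Longrightarrow> \<alpha>' \<in> M \<Longrightarrow> \<beta>' \<in> M \<Longrightarrow>
               s \<alpha> = r \<beta> \<Longrightarrow> s \<alpha>' = r \<beta>' \<Longrightarrow> (c \<alpha> \<beta>, c \<alpha>' \<beta>') \<in> R \<Longrightarrow>
               d \<alpha> = d \<alpha>' \<Longrightarrow> (\<alpha>, \<alpha>') \<in> R \<and> (\<beta>, \<beta>') \<in> R"
    and h4: "\<And>\<alpha> \<beta>. \<alpha> \<in> M \<Longrightarrow> \<beta> \<in> M \<Longrightarrow> (s \<alpha>, r \<beta>) \<in> R \<Longrightarrow>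
               \<exists>\<alpha>' \<beta>'. (\<alpha>', \<alpha>) \<in> R \<and> (\<beta>', \<beta>) \<in> R \<and> s \<alpha>' = r \<beta>'"
  shows
    "(\<forall>\<mu> \<nu>. (\<mu>, \<nu>) \<in> R \<longrightarrow> d \<mu> = d \<nu> \<and> (r \<mu>, r \<nu>) \<in> R \<and> (s \<mu>, s \<nu>) \<in> R) \<and>
     (\<forall>\<xi>\<in>M. \<forall>\<mu>\<in>M. (s \<xi>, r \<mu>) \<in> R \<longrightarrow>
        (\<exists>\<alpha>\<in>R `` {\<xi>}. \<exists>\<beta>\<in>R `` {\<mu>}. s \<alpha> = r \<beta>) \<and>
        (\<forall>\<alpha>\<in>R `` {\<xi>}. \<forall>\<beta>\<in>R `` {\<mu>}. \<forall>\<alpha>'\<in>R `` {\<xi>}. \<forall>\<beta>'\<in>R `` {\<mu>}.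
           s \<alpha> = r \<beta> \<longrightarrow> s \<alpha>' = r \<beta>' \<longrightarrow> (c \<alpha> \<beta>, c \<alpha>' \<beta>') \<in> R)) \<and>
     (\<forall>\<mu>\<in>M. qdeg d (R `` {\<mu>}) = d \<mu> \<and>
              qmap R r (R `` {\<mu>}) = R `` {r \<mu>} \<and> qmap R s (R `` {\<mu>}) = R `` {s \<mu>}) \<and>
     (\<forall>\<xi>\<in>M. \<forall>\<mu>\<in>M. (s \<xi>, r \<mu>) \<in> R \<longrightarrow>
        (\<forall>\<alpha>\<in>R `` {\<xi>}. \<forall>\<beta>\<in>R `` {\<mu>}. s \<alpha> = r \<beta> \<longrightarrow>
           qcomp R r s c (R `` {\<xi>}) (R `` {\<mu>}) = R `` {c \<alpha> \<beta>})) \<and>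
     is_kgraph k (M // R) (qmap R r) (qmap R s) (qcomp R r s c) (qdeg d)"
proof -
  have RM: "\<And>a b. (a,b)\<in>R \<Longrightarrow> a\<in>M \<and> b\<in>M" using eq unfolding equiv_def refl_on_def by blast
  have Rrefl: "\<And>a. a\<in>M \<Longrightarrow> (a,a)\<in>R" using eq unfolding equiv_def refl_on_def by blast
  have Rsym: "\<And>a b. (a,b)\<in>R \<Longrightarrow> (b,a)\<in>R" using eq unfolding equiv_def sym_def by blast
  have Rtrans: "\<And>a b x. (a,b)\<in>R \<Longrightarrow> (b,x)\<in>R \<Longrightarrow> (a,x)\<in>R" using eq unfolding equiv_def trans_def by blast
  have clsI: "\<And>a b. (a,b)\<in>R \<Longrightarrow> R``{a} = R``{b}" using eq equiv_class_eq by metis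
  have clsD: "\<And>a b. a\<in>M \<Longrightarrow> b\<in>M \<Longrightarrow> R``{a} = R``{b} \<Longrightarrow> (a,b)\<in>R" using eq eq_equiv_class_iff by metis
  from kg have Mne: "M \<noteq> {}" and cnt: "countable M" and cat: "is_category M r s c"
    and dNk: "\<forall>\<mu>\<in>M. d \<mu> \<in> Nk k" and did: "\<forall>\<mu>\<in>M. r \<mu> = \<mu> \<longrightarrow> d \<mu> = (\<lambda>_. 0)"
    and dadd: "\<forall>\<mu>\<in>M. \<forall>\<nu>\<in>M. s \<mu> = r \<nu> \<longrightarrow> d (c \<mu> \<nu>) = addk (d \<mu>) (d \<nu>)"
    and fac: "\<forall>\<xi>\<in>M. \<forall>m\<in>Nk k. \<forall>n\<in>Nk k. d \<xi> = addk m n \<longrightarrow>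
        (\<exists>!p. fst p \<in> M \<and> snd p \<in> M \<and> s (fst p) = r (snd p) \<and>
              d (fst p) = m \<and> d (snd p) = n \<and> c (fst p) (snd p) = \<xi>)"
    unfolding is_kgraph_def by auto
  from cat have C1: "\<forall>\<mu>\<in>M. r \<mu> \<in> M \<and> s \<mu> \<in> M \<and>
        r (r \<mu>) = r \<mu> \<and> s (r \<mu>) = r \<mu> \<and> r (s \<mu>) = s \<mu> \<and> s (s \<mu>) = s \<mu> \<and>
        c (r \<mu>) \<mu> = \<mu> \<and> c \<mu> (s \<mu>) = \<mu>"
    and C2: "\<forall>\<mu>\<in>M. \<forall>\<nu>\<in>M. s \<mu> = r \<nu> \<longrightarrow> c \<mu> \<nu> \<in> M \<and> r (c \<mu> \<nu>) = r \<mu> \<and> s (c \<mu> \<nu>) = s \<nu>"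
    and C3: "\<forall>\<mu>\<in>M. \<forall>\<nu>\<in>M. \<forall>\<rho>\<in>M. s \<mu> = r \<nu> \<longrightarrow> s \<nu> = r \<rho> \<longrightarrow>
        c (c \<mu> \<nu>) \<rho> = c \<mu> (c \<nu> \<rho>)"
    unfolding is_category_def by auto
  have rR: "\<And>\<mu> \<nu>. (\<mu>,\<nu>)\<in>R \<Longrightarrow> (r \<mu>, r \<nu>)\<in>R"
  proof -
    fix \<mu> \<nu> assume a: "(\<mu>,\<nu>)\<in>R"
    then have m: "\<mu>\<in>M" "\<nu>\<in>M" using RM by auto
    have "(c (r \<mu>) \<mu>, c (r \<nu>) \<nu>) \<in> R" using a m C1 by auto
    moreover have "d (r \<mu>) = d (r \<nu>)" using m C1 did by auto
    ultimately show "(r \<mu>, r \<nu>)\<in>R" using h3[of "r \<mu>" \<mu> "r \<nu>" \<nu>] m C1 by auto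
  qed
  have sR: "\<And>\<mu> \<nu>. (\<mu>,\<nu>)\<in>R \<Longrightarrow> (s \<mu>, s \<nu>)\<in>R"
  proof -
    fix \<mu> \<nu> assume a: "(\<mu>,\<nu>)\<in>R"
    then have m: "\<mu>\<in>M" "\<nu>\<in>M" using RM by auto
    have "(c \<mu> (s \<mu>), c \<nu> (s \<nu>)) \<in> R" using a m C1 by auto
    moreover have "d \<mu> = d \<nu>" using a h1 by auto
    ultimately show "(s \<mu>, s \<nu>)\<in>R" using h3[of \<mu> "s \<mu>" \<nu> "s \<nu>"] m C1 by auto
  qed
  have P1: "\<forall>\<mu> \<nu>. (\<mu>, \<nu>) \<in> R \<longrightarrow> d \<mu> = d \<nu> \<and> (r \<mu>, r \<nu>) \<in> R \<and> (s \<mu>, s \<nu>) \<in> R"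
    using h1 rR sR by blast
  have cwd: "\<And>\<xi> \<mu> \<alpha> \<beta> \<alpha>' \<beta>'. (\<xi>,\<alpha>)\<in>R \<Longrightarrow> (\<mu>,\<beta>)\<in>R \<Longrightarrow> (\<xi>,\<alpha>')\<in>R \<Longrightarrow> (\<mu>,\<beta>')\<in>R \<Longrightarrow>
      s \<alpha> = r \<beta> \<Longrightarrow> s \<alpha>' = r \<beta>' \<Longrightarrow> (c \<alpha> \<beta>, c \<alpha>' \<beta>') \<in> R"
  proof -
    fix \<xi> \<mu> \<alpha> \<beta> \<alpha>' \<beta>' assume a: "(\<xi>,\<alpha>)\<in>R" "(\<mu>,\<beta>)\<in>R" "(\<xi>,\<alpha>')\<in>R" "(\<mu>,\<beta>')\<in>R"
      "s \<alpha> = r \<beta>" "s \<alpha>' = r \<beta>'"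
    have "(\<alpha>,\<alpha>')\<in>R" "(\<beta>,\<beta>')\<in>R" using a Rsym Rtrans by blast+
    then show "(c \<alpha> \<beta>, c \<alpha>' \<beta>') \<in> R" using h2 a by auto
  qed
  have ex: "\<And>\<xi> \<mu>. \<xi>\<in>M \<Longrightarrow> \<mu>\<in>M \<Longrightarrow> (s \<xi>, r \<mu>) \<in> R \<Longrightarrow> \<exists>\<alpha>\<in>R `` {\<xi>}. \<exists>\<beta>\<in>R `` {\<mu>}. s \<alpha> = r \<beta>"
  proof -
    fix \<xi> \<mu> assume a: "\<xi>\<in>M" "\<mu>\<in>M" "(s \<xi>, r \<mu>) \<in> R"
    obtain \<alpha>' \<beta>' where "(\<alpha>', \<xi>) \<in> R" "(\<beta>', \<mu>) \<in> R" "s \<alpha>' = r \<beta>'" using h4[OF a] by blast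
    then show "\<exists>\<alpha>\<in>R `` {\<xi>}. \<exists>\<beta>\<in>R `` {\<mu>}. s \<alpha> = r \<beta>" using Rsym by blast
  qed
  have P2: "\<forall>\<xi>\<in>M. \<forall>\<mu>\<in>M. (s \<xi>, r \<mu>) \<in> R \<longrightarrow>
        (\<exists>\<alpha>\<in>R `` {\<xi>}. \<exists>\<beta>\<in>R `` {\<mu>}. s \<alpha> = r \<beta>) \<and>
        (\<forall>\<alpha>\<in>R `` {\<xi>}. \<forall>\<beta>\<in>R `` {\<mu>}. \<forall>\<alpha>'\<in>R `` {\<xi>}. \<forall>\<beta>'\<in>R `` {\<mu>}.
           s \<alpha> = r \<beta> \<longrightarrow> s \<alpha>' = r \<beta>' \<longrightarrow> (c \<alpha> \<beta>, c \<alpha>' \<beta>') \<in> R)"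
    using ex cwd by blast
  have qm: "\<And>f \<mu>. (\<And>a b. (a,b)\<in>R \<Longrightarrow> (f a, f b)\<in>R) \<Longrightarrow> \<mu>\<in>M \<Longrightarrow> qmap R f (R``{\<mu>}) = R``{f \<mu>}"
  proof -
    fix f \<mu> assume f: "\<And>a b. (a,b)\<in>R \<Longrightarrow> (f a, f b)\<in>R" and m: "\<mu>\<in>M"
    have "\<mu> \<in> R``{\<mu>}" using Rrefl m by auto
    then have "(SOME x. x \<in> R``{\<mu>}) \<in> R``{\<mu>}" by (rule someI)
    then have "(\<mu>, SOME x. x \<in> R``{\<mu>}) \<in> R" by auto
    then have "(f (SOME x. x \<in> R``{\<mu>}), f \<mu>) \<in> R" using f Rsym by blast
    then show "qmap R f (R``{\<mu>}) = R``{f \<mu>}" unfolding qmap_def using clsI by blast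
  qed
  have qr: "\<And>\<mu>. \<mu>\<in>M \<Longrightarrow> qmap R r (R``{\<mu>}) = R``{r \<mu>}" using qm rR by blast
  have qs: "\<And>\<mu>. \<mu>\<in>M \<Longrightarrow> qmap R s (R``{\<mu>}) = R``{s \<mu>}" using qm sR by blast
  have qd: "\<And>\<mu>. \<mu>\<in>M \<Longrightarrow> qdeg d (R``{\<mu>}) = d \<mu>"
  proof -
    fix \<mu> assume m: "\<mu>\<in>M"
    have "\<mu> \<in> R``{\<mu>}" using Rrefl m by auto
    then have "(SOME x. x \<in> R``{\<mu>}) \<in> R``{\<mu>}" by (rule someI)
    then have "(\<mu>, SOME x. x \<in> R``{\<mu>}) \<in> R" by auto
    then show "qdeg d (R``{\<mu>}) = d \<mu>" unfolding qdeg_def using h1 by metis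
  qed
  have P3: "\<forall>\<mu>\<in>M. qdeg d (R `` {\<mu>}) = d \<mu> \<and>
              qmap R r (R `` {\<mu>}) = R `` {r \<mu>} \<and> qmap R s (R `` {\<mu>}) = R `` {s \<mu>}"
    using qd qr qs by blast
  have qc: "\<And>\<xi> \<mu> \<alpha> \<beta>. (\<xi>,\<alpha>)\<in>R \<Longrightarrow> (\<mu>,\<beta>)\<in>R \<Longrightarrow> s \<alpha> = r \<beta> \<Longrightarrow>
     qcomp R r s c (R``{\<xi>}) (R``{\<mu>}) = R``{c \<alpha> \<beta>}"
  proof -
    fix \<xi> \<mu> \<alpha> \<beta> assume a: "(\<xi>,\<alpha>)\<in>R" "(\<mu>,\<beta>)\<in>R" "s \<alpha> = r \<beta>"
    define P where "P = (\<lambda>p. fst p \<in> R``{\<xi>} \<and> snd p \<in> R``{\<mu>} \<and> s (fst p) = r (snd p))"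
    have "P (\<alpha>,\<beta>)" using a unfolding P_def by auto
    then have "P (SOME p. P p)" by (rule someI)
    then have "(c (fst (SOME p. P p)) (snd (SOME p. P p)), c \<alpha> \<beta>) \<in> R"
      unfolding P_def using cwd a by blast
    then show "qcomp R r s c (R``{\<xi>}) (R``{\<mu>}) = R``{c \<alpha> \<beta>}"
      unfolding qcomp_def Let_def P_def[symmetric] using clsI by blast
  qed
  have qc0: "\<And>\<alpha> \<beta>. \<alpha>\<in>M \<Longrightarrow> \<beta>\<in>M \<Longrightarrow> s \<alpha> = r \<beta> \<Longrightarrow>
     qcomp R r s c (R``{\<alpha>}) (R``{\<beta>}) = R``{c \<alpha> \<beta>}"
    using qc Rrefl by blast
  have P4: "\<forall>\<xi>\<in>M. \<forall>\<mu>\<in>M. (s \<xi>, r \<mu>) \<in> R \<longrightarrow>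
        (\<forall>\<alpha>\<in>R `` {\<xi>}. \<forall>\<beta>\<in>R `` {\<mu>}. s \<alpha> = r \<beta> \<longrightarrow>
           qcomp R r s c (R `` {\<xi>}) (R `` {\<mu>}) = R `` {c \<alpha> \<beta>})"
    using qc by blast
  have rep: "\<And>\<xi> \<mu>. \<xi>\<in>M \<Longrightarrow> \<mu>\<in>M \<Longrightarrow> (s \<xi>, r \<mu>) \<in> R \<Longrightarrow>
      \<exists>\<alpha> \<beta>. \<alpha>\<in>M \<and> \<beta>\<in>M \<and> R``{\<alpha>} = R``{\<xi>} \<and> R``{\<beta>} = R``{\<mu>} \<and> s \<alpha> = r \<beta>"
  proof -
    fix \<xi> \<mu> assume a: "\<xi>\<in>M" "\<mu>\<in>M" "(s \<xi>, r \<mu>) \<in> R"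
    obtain \<alpha>' \<beta>' where b: "(\<alpha>', \<xi>) \<in> R" "(\<beta>', \<mu>) \<in> R" "s \<alpha>' = r \<beta>'" using h4[OF a] by blast
    have "R``{\<alpha>'} = R``{\<xi>}" "R``{\<beta>'} = R``{\<mu>}" using clsI b by blast+
    moreover have "\<alpha>'\<in>M" "\<beta>'\<in>M" using RM b by blast+
    ultimately show "\<exists>\<alpha> \<beta>. \<alpha>\<in>M \<and> \<beta>\<in>M \<and> R``{\<alpha>} = R``{\<xi>} \<and> R``{\<beta>} = R``{\<mu>} \<and> s \<alpha> = r \<beta>"
      using b(3) by blast
  qed
  let ?Q = "M // R"
  have Qcnt: "countable ?Q"
  proof -
    have "?Q = (\<lambda>x. R``{x}) ` M" unfolding quotient_def by auto
    then show ?thesis using cnt by simp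
  qed
  have QC1: "\<forall>X\<in>?Q. qmap R r X \<in> ?Q \<and> qmap R s X \<in> ?Q \<and>
        qmap R r (qmap R r X) = qmap R r X \<and> qmap R s (qmap R r X) = qmap R r X \<and>
        qmap R r (qmap R s X) = qmap R s X \<and> qmap R s (qmap R s X) = qmap R s X \<and>
        qcomp R r s c (qmap R r X) X = X \<and> qcomp R r s c X (qmap R s X) = X"
  proof
    fix X assume "X \<in> ?Q"
    then obtain \<mu> where X: "X = R``{\<mu>}" and m: "\<mu>\<in>M" by (blast elim: quotientE)
    have m2: "r \<mu> \<in> M" "s \<mu> \<in> M" using m C1 by auto
    show "qmap R r X \<in> ?Q \<and> qmap R s X \<in> ?Q \<and>
        qmap R r (qmap R r X) = qmap R r X \<and> qmap R s (qmap R r X) = qmap R r X \<and>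
        qmap R r (qmap R s X) = qmap R s X \<and> qmap R s (qmap R s X) = qmap R s X \<and>
        qcomp R r s c (qmap R r X) X = X \<and> qcomp R r s c X (qmap R s X) = X"
      unfolding X using m m2 C1 qr qs qc0[of "r \<mu>" \<mu>] qc0[of \<mu> "s \<mu>"] quotientI[of "r \<mu>" M R] quotientI[of "s \<mu>" M R] by auto
  qed
  have QC2: "\<forall>X\<in>?Q. \<forall>Y\<in>?Q. qmap R s X = qmap R r Y \<longrightarrow>
      qcomp R r s c X Y \<in> ?Q \<and> qmap R r (qcomp R r s c X Y) = qmap R r X \<and>
      qmap R s (qcomp R r s c X Y) = qmap R s Y"
  proof (intro ballI impI)
    fix X Y assume "X \<in> ?Q" "Y \<in> ?Q" and e: "qmap R s X = qmap R r Y"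
    then obtain \<xi> \<mu> where X: "X = R``{\<xi>}" and Y: "Y = R``{\<mu>}" and m: "\<xi>\<in>M" "\<mu>\<in>M"
      by (metis quotientE)
    have "(s \<xi>, r \<mu>) \<in> R" using e unfolding X Y qr[OF m(2)] qs[OF m(1)] using clsD C1 m by auto
    then obtain \<alpha> \<beta> where ab: "\<alpha>\<in>M" "\<beta>\<in>M" "R``{\<alpha>} = X" "R``{\<beta>} = Y" "s \<alpha> = r \<beta>"
      using rep[OF m(1) m(2)] unfolding X Y by blast
    have cm: "qcomp R r s c X Y = R``{c \<alpha> \<beta>}" using qc0[OF ab(1,2,5)] ab(3,4) by simp
    have "c \<alpha> \<beta> \<in> M" "r (c \<alpha> \<beta>) = r \<alpha>" "s (c \<alpha> \<beta>) = s \<beta>" using C2 ab by auto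
    then show "qcomp R r s c X Y \<in> ?Q \<and> qmap R r (qcomp R r s c X Y) = qmap R r X \<and>
      qmap R s (qcomp R r s c X Y) = qmap R s Y"
      unfolding ab(3,4)[symmetric] qc0[OF ab(1,2,5)] using qr qs quotientI[of "c \<alpha> \<beta>" M R] ab(1,2) by simp
  qed
  have QC3: "\<forall>X\<in>?Q. \<forall>Y\<in>?Q. \<forall>Z\<in>?Q. qmap R s X = qmap R r Y \<longrightarrow> qmap R s Y = qmap R r Z \<longrightarrow>
        qcomp R r s c (qcomp R r s c X Y) Z = qcomp R r s c X (qcomp R r s c Y Z)"
  proof (intro ballI impI)
    fix X Y Z assume "X \<in> ?Q" "Y \<in> ?Q" "Z \<in> ?Q" and e: "qmap R s X = qmap R r Y" and e2: "qmap R s Y = qmap R r Z"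
    then obtain \<xi> \<mu> \<rho> where X: "X = R``{\<xi>}" and Y: "Y = R``{\<mu>}" and Z: "Z = R``{\<rho>}"
      and m: "\<xi>\<in>M" "\<mu>\<in>M" "\<rho>\<in>M"
      by (metis quotientE)
    have "(s \<xi>, r \<mu>) \<in> R" using e unfolding X Y qr[OF m(2)] qs[OF m(1)] using clsD C1 m by auto
    then obtain \<alpha> \<beta> where ab: "\<alpha>\<in>M" "\<beta>\<in>M" "R``{\<alpha>} = X" "R``{\<beta>} = Y" "s \<alpha> = r \<beta>"
      using rep[OF m(1) m(2)] unfolding X Y by blast
    have cm: "qcomp R r s c X Y = R``{c \<alpha> \<beta>}" using qc0[OF ab(1,2,5)] ab(3,4) by simp
    have abm: "c \<alpha> \<beta> \<in> M" "s (c \<alpha> \<beta>) = s \<beta>" using C2 ab by auto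
    have "(s \<beta>, r \<rho>) \<in> R" using e2 unfolding ab(4)[symmetric] Z qr[OF m(3)] qs[OF ab(2)] using clsD C1 m ab by auto
    then have "(s (c \<alpha> \<beta>), r \<rho>) \<in> R" using abm by simp
    then obtain \<delta> \<gamma> where dg: "\<delta>\<in>M" "\<gamma>\<in>M" "R``{\<delta>} = R``{c \<alpha> \<beta>}" "R``{\<gamma>} = Z" "s \<delta> = r \<gamma>"
      using rep[OF abm(1) m(3)] unfolding Z by blast
    have dR: "(\<delta>, c \<alpha> \<beta>) \<in> R" using dg abm clsD by auto
    then have "d \<delta> = addk (d \<alpha>) (d \<beta>)" using h1 dadd ab by auto
    then obtain p where p: "fst p \<in> M" "snd p \<in> M" "s (fst p) = r (snd p)"
        "d (fst p) = d \<alpha>" "d (snd p) = d \<beta>" "c (fst p) (snd p) = \<delta>"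
      using fac dg ab dNk by blast
    define \<alpha>' where "\<alpha>' = fst p"
    define \<beta>' where "\<beta>' = snd p"
    have p': "\<alpha>' \<in> M" "\<beta>' \<in> M" "s \<alpha>' = r \<beta>'" "d \<alpha>' = d \<alpha>" "c \<alpha>' \<beta>' = \<delta>"
      using p unfolding \<alpha>'_def \<beta>'_def by auto
    have "(\<alpha>', \<alpha>) \<in> R \<and> (\<beta>', \<beta>) \<in> R" using h3[of \<alpha>' \<beta>' \<alpha> \<beta>] p' ab dR by auto
    then have cl: "R``{\<alpha>'} = X" "R``{\<beta>'} = Y" using clsI ab by auto

    have sb: "s \<beta>' = r \<gamma>" using C2 p' dg by auto
    have bg: "c \<beta>' \<gamma> \<in> M" "r (c \<beta>' \<gamma>) = r \<beta>'" using C2 p' dg(2) sb by auto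
    have "qcomp R r s c (qcomp R r s c X Y) Z = R``{c \<delta> \<gamma>}"
      unfolding cm dg(3)[symmetric] dg(4)[symmetric] using qc0[OF dg(1,2,5)] .
    also have "c \<delta> \<gamma> = c \<alpha>' (c \<beta>' \<gamma>)" using C3 p' dg(2) sb by auto
    also have "R``{c \<alpha>' (c \<beta>' \<gamma>)} = qcomp R r s c X (R``{c \<beta>' \<gamma>})"
      using qc0[of \<alpha>' "c \<beta>' \<gamma>"] p' bg cl by simp
    also have "R``{c \<beta>' \<gamma>} = qcomp R r s c Y Z"
      using qc0[of \<beta>' \<gamma>] p' dg cl sb by simp
    finally show "qcomp R r s c (qcomp R r s c X Y) Z = qcomp R r s c X (qcomp R r s c Y Z)" .
  qed
  have Qcat: "is_category ?Q (qmap R r) (qmap R s) (qcomp R r s c)"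
    unfolding is_category_def using QC1 QC2 QC3 by blast
  have QdNk: "\<forall>X\<in>?Q. qdeg d X \<in> Nk k"
    using qd dNk by (auto elim!: quotientE)
  have Qdid: "\<forall>X\<in>?Q. qmap R r X = X \<longrightarrow> qdeg d X = (\<lambda>_. 0)"
  proof (intro ballI impI)
    fix X assume "X\<in>?Q" and e: "qmap R r X = X"
    then obtain \<mu> where X: "X = R``{\<mu>}" and m: "\<mu>\<in>M" by (blast elim: quotientE)
    have "(r \<mu>, \<mu>) \<in> R" using e X m qr clsD C1 by auto
    then have "d \<mu> = d (r \<mu>)" using h1 by metis
    also have "\<dots> = (\<lambda>_. 0)" using did C1 m by auto
    finally show "qdeg d X = (\<lambda>_. 0)" using qd X m by auto
  qed
  have Qdadd: "\<forall>X\<in>?Q. \<forall>Y\<in>?Q. qmap R s X = qmap R r Y \<longrightarrow>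
      qdeg d (qcomp R r s c X Y) = addk (qdeg d X) (qdeg d Y)"
  proof (intro ballI impI)
    fix X Y assume "X \<in> ?Q" "Y \<in> ?Q" and e: "qmap R s X = qmap R r Y"
    then obtain \<xi> \<mu> where X: "X = R``{\<xi>}" and Y: "Y = R``{\<mu>}" and m: "\<xi>\<in>M" "\<mu>\<in>M"
      by (metis quotientE)
    have "(s \<xi>, r \<mu>) \<in> R" using e unfolding X Y qr[OF m(2)] qs[OF m(1)] using clsD C1 m by auto
    then obtain \<alpha> \<beta> where ab: "\<alpha>\<in>M" "\<beta>\<in>M" "R``{\<alpha>} = X" "R``{\<beta>} = Y" "s \<alpha> = r \<beta>"
      using rep[OF m(1) m(2)] unfolding X Y by blast
    have cm: "qcomp R r s c X Y = R``{c \<alpha> \<beta>}" using qc0[OF ab(1,2,5)] ab(3,4) by simp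
    have "c \<alpha> \<beta> \<in> M" using C2 ab by auto
    then show "qdeg d (qcomp R r s c X Y) = addk (qdeg d X) (qdeg d Y)"
      using qd[OF ab(1)] qd[OF ab(2)] qd[OF \<open>c \<alpha> \<beta> \<in> M\<close>] ab dadd cm by simp
  qed
  have Qfac: "\<forall>Z\<in>?Q. \<forall>m\<in>Nk k. \<forall>n\<in>Nk k. qdeg d Z = addk m n \<longrightarrow>
        (\<exists>!p. fst p \<in> ?Q \<and> snd p \<in> ?Q \<and> qmap R s (fst p) = qmap R r (snd p) \<and>
              qdeg d (fst p) = m \<and> qdeg d (snd p) = n \<and> qcomp R r s c (fst p) (snd p) = Z)"
  proof (intro ballI impI)
    fix Z m n assume "Z \<in> ?Q" and mn: "m \<in> Nk k" "n \<in> Nk k" and e: "qdeg d Z = addk m n"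
    then obtain \<xi> where Z: "Z = R``{\<xi>}" and xm: "\<xi>\<in>M" by (blast elim: quotientE)
    have "d \<xi> = addk m n" using e qd Z xm by auto
    then obtain p where p: "fst p \<in> M" "snd p \<in> M" "s (fst p) = r (snd p)"
        "d (fst p) = m" "d (snd p) = n" "c (fst p) (snd p) = \<xi>"
      using fac xm mn by blast
    define \<alpha> where "\<alpha> = fst p"
    define \<beta> where "\<beta> = snd p"
    have ab: "\<alpha> \<in> M" "\<beta> \<in> M" "s \<alpha> = r \<beta>" "d \<alpha> = m" "d \<beta> = n" "c \<alpha> \<beta> = \<xi>"
      using p unfolding \<alpha>_def \<beta>_def by auto
    show "\<exists>!p. fst p \<in> ?Q \<and> snd p \<in> ?Q \<and> qmap R s (fst p) = qmap R r (snd p) \<and>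
              qdeg d (fst p) = m \<and> qdeg d (snd p) = n \<and> qcomp R r s c (fst p) (snd p) = Z"
    proof (rule ex1I[of _ "(R``{\<alpha>}, R``{\<beta>})"])
      show "fst (R``{\<alpha>}, R``{\<beta>}) \<in> ?Q \<and> snd (R``{\<alpha>}, R``{\<beta>}) \<in> ?Q \<and>
        qmap R s (fst (R``{\<alpha>}, R``{\<beta>})) = qmap R r (snd (R``{\<alpha>}, R``{\<beta>})) \<and>
        qdeg d (fst (R``{\<alpha>}, R``{\<beta>})) = m \<and> qdeg d (snd (R``{\<alpha>}, R``{\<beta>})) = n \<and>
        qcomp R r s c (fst (R``{\<alpha>}, R``{\<beta>})) (snd (R``{\<alpha>}, R``{\<beta>})) = Z"
        using ab quotientI qs qr qd qc0 Z by auto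
    next
      fix q assume q: "fst q \<in> ?Q \<and> snd q \<in> ?Q \<and> qmap R s (fst q) = qmap R r (snd q) \<and>
              qdeg d (fst q) = m \<and> qdeg d (snd q) = n \<and> qcomp R r s c (fst q) (snd q) = Z"
      then obtain \<alpha>1 \<beta>1 where X: "fst q = R``{\<alpha>1}" and Y: "snd q = R``{\<beta>1}" and m1: "\<alpha>1\<in>M" "\<beta>1\<in>M"
        by (metis quotientE)
      have "(s \<alpha>1, r \<beta>1) \<in> R" using q unfolding X Y qr[OF m1(2)] qs[OF m1(1)] using clsD C1 m1 by auto
      then obtain \<alpha>2 \<beta>2 where a2: "\<alpha>2\<in>M" "\<beta>2\<in>M" "R``{\<alpha>2} = fst q" "R``{\<beta>2} = snd q" "s \<alpha>2 = r \<beta>2"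
        using rep[OF m1] unfolding X Y by blast
      have "qcomp R r s c (fst q) (snd q) = R``{c \<alpha>2 \<beta>2}" using qc0[OF a2(1,2,5)] a2(3,4) by simp
      then have "R``{c \<alpha>2 \<beta>2} = R``{c \<alpha> \<beta>}" using q Z ab by auto
      moreover have "c \<alpha>2 \<beta>2 \<in> M" using C2 a2 by auto
      ultimately have cR: "(c \<alpha>2 \<beta>2, c \<alpha> \<beta>) \<in> R" using clsD[of "c \<alpha>2 \<beta>2" "c \<alpha> \<beta>"] ab xm by simp
      have "d \<alpha>2 = m" using q qd[OF a2(1)] a2(3) by simp
      then have "(\<alpha>2, \<alpha>) \<in> R \<and> (\<beta>2, \<beta>) \<in> R" using h3[of \<alpha>2 \<beta>2 \<alpha> \<beta>] a2 ab cR by auto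
      then have "fst q = R``{\<alpha>}" "snd q = R``{\<beta>}" using clsI[of \<alpha>2 \<alpha>] clsI[of \<beta>2 \<beta>] a2(3,4) by simp_all
      then show "q = (R``{\<alpha>}, R``{\<beta>})" by (simp add: prod_eq_iff)
    qed
  qed
  have P5: "is_kgraph k ?Q (qmap R r) (qmap R s) (qcomp R r s c) (qdeg d)"
    unfolding is_kgraph_def using Mne Qcnt Qcat QdNk Qdid Qdadd Qfac by auto
  show ?thesis using P1 P2 P3 P4 P5 by blast
qed

end
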